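(* For all even $n\ge2$ and even $q\ge2$, $$A_{BMU}(n,q)\le\frac{\binom{n}{n/2}\left(\frac q2\right)^n}{n}.$$ In particular (as $\binom{n}{n/2}\approx 2^{n+1}/\sqrt{2\pi n}$), the redundancy of balanced MU codes is at least $1.5\log_q n+O(1)$.
   Context: $\Sigma_q=\{0,\dots,q-1\}$ with $q$ even, $n$ even. A word $\vec a\in\Sigma_q^n$ is balanced if the number of positions $i$ with $a_i\in[0,q/2-1]$ equals $n/2$ (for $q=2$: Hamming weight $n/2$). A code $\mathcal C\subseteq\Sigma_q^n$ is mutually uncorrelated (MU) if for any two not necessarily distinct codewords $\vec a,\vec b$, no proper nonempty prefix of $\vec a$ equals a suffix of $\vec b$ of the same length. A balanced MU code is an MU code all of whose codewords are balanced; $A_{BMU}(n,q)$ is the largest size of a balanced MU code in $\Sigma_q^n$. Redundancy of $A\subseteq\Sigma_q^n$ is $n-\log_q|A|$. *)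

theory Defs
  imports Complex_Main
begin

definition words :: "nat \<Rightarrow> nat \<Rightarrow> nat list set" where
  "words n q = {a. length a = n \<and> set a \<subseteq> {0..<q}}"

definition balanced :: "nat \<Rightarrow> nat \<Rightarrow> nat list \<Rightarrow> bool" where
  "balanced n q a \<longleftrightarrow> card {i. i < length a \<and> a ! i < q div 2} = n div 2"

definition mutually_uncorrelated :: "nat list set \<Rightarrow> bool" where
  "mutually_uncorrelated C \<longleftrightarrow>
     (\<forall>a\<in>C. \<forall>b\<in>C. \<forall>k. 0 < k \<and> k < length a \<longrightarrow>
        take k a \<noteq> drop (length b - k) b)"

definition balanced_MU_code :: "nat \<Rightarrow> nat \<Rightarrow> nat list set \<Rightarrow> bool" where
  "balanced_MU_code n q C \<longleftrightarrow>
     C \<subseteq> words n q \<and> mutually_uncorrelated C \<and> (\<forall>a\<in>C. balanced n q a)"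

definition A_BMU :: "nat \<Rightarrow> nat \<Rightarrow> nat" where
  "A_BMU n q = Max {card C | C. balanced_MU_code n q C}"

end

theory Submission
  imports Defs
begin

lemma balanced_filter: "balanced n q a \<longleftrightarrow> length (filter (\<lambda>x. x < q div 2) a) = n div 2"
  unfolding balanced_def by (simp add: length_filter_conv_card)

lemma filter_rotate_len: "length (filter P (rotate k a)) = length (filter P a)"
proof -
  let ?m = "k mod length a"
  have "length (filter P (rotate k a)) = length (filter P (drop ?m a)) + length (filter P (take ?m a))"
    by (simp add: rotate_drop_take)
  also have "\<dots> = length (filter P (take ?m a @ drop ?m a))"
    by (simp only: filter_append length_append add.commute)
  also have "take ?m a @ drop ?m a = a" by (rule append_take_drop_id)
  finally show ?thesis .
qed

lemma rot_contra:
  assumes mu: "mutually_uncorrelated C" and a: "a \<in> C" and b: "b \<in> C"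
    and la: "length a = n" and lb: "length b = n" and kj: "k < j" and jn: "j < n"
    and eq: "rotate k a = rotate j b"
  shows False
proof -
  have "rotate (n-k) (rotate k a) = rotate (n-k+k) a" by (simp add: rotate_rotate)
  also have "\<dots> = a" using kj jn la by (intro rotate_id) simp
  finally have 1: "rotate (n-k) (rotate k a) = a" .
  have "rotate (n-k) (rotate j b) = rotate (n-k+j) b" by (simp add: rotate_rotate)
  also have "\<dots> = rotate ((n-k+j) mod n) b" using lb by (metis rotate_conv_mod)
  also have "(n-k+j) mod n = j - k"
  proof -
    have 2: "n-k+j = (j-k) + n" using kj jn by simp
    have 3: "j-k < n" using kj jn by simp
    show ?thesis unfolding 2 using 3 by (metis mod_add_self2 mod_less)
  qed
  finally have "a = rotate (j-k) b" using 1 eq by simp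
  also have "\<dots> = drop (j-k) b @ take (j-k) b"
    using rotate_drop_take[of "j-k" b] lb kj jn by simp
  finally have aeq: "a = drop (j-k) b @ take (j-k) b" .
  have "take (n-(j-k)) a = drop (j-k) b" using aeq lb kj jn by simp
  moreover have "length b - (n - (j-k)) = j - k" using lb kj jn by simp
  ultimately have "take (n-(j-k)) a = drop (length b - (n-(j-k))) b" by simp
  moreover have "0 < n-(j-k)" "n-(j-k) < length a" using la kj jn by auto
  ultimately show False using mu a b unfolding mutually_uncorrelated_def by blast
qed

lemma card_balanced:
  assumes "even q"
  shows "card {a \<in> words n q. balanced n q a} \<le> (n choose (n div 2)) * (q div 2) ^ n"
proof -
  define h where "h = q div 2"
  have q: "q = 2*h" using assms h_def by simp
  define B where "B = {a \<in> words n q. balanced n q a}"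
  define f where "f = (\<lambda>a::nat list. ({i. i < length a \<and> a ! i < h}, map (\<lambda>x. x mod h) a))"
  have fin1: "finite {S. S \<subseteq> {0..<n} \<and> card S = n div 2}" by simp
  have fin2: "finite {xs. set xs \<subseteq> {0..<h} \<and> length xs = n}"
    using finite_lists_length_eq[of "{0..<h}" n] by simp
  have inj: "inj_on f B"
  proof
    fix a b assume a: "a \<in> B" and b: "b \<in> B" and e: "f a = f b"
    have la: "length a = n" and lb: "length b = n" using a b by (auto simp: B_def words_def)
    have sa: "set a \<subseteq> {0..<q}" and sb: "set b \<subseteq> {0..<q}" using a b by (auto simp: B_def words_def)
    have S: "{i. i < n \<and> a ! i < h} = {i. i < n \<and> b ! i < h}" and M: "map (\<lambda>x. x mod h) a = map (\<lambda>x. x mod h) b"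
      using e la lb by (auto simp: f_def)
    show "a = b"
    proof (rule nth_equalityI)
      show "length a = length b" using la lb by simp
      fix i assume i: "i < length a"
      have "a ! i \<in> set a" using i by (rule nth_mem)
      then have ai: "a ! i < 2*h" using sa q by auto
      have "b ! i \<in> set b" using i la lb by (intro nth_mem) simp
      then have bi: "b ! i < 2*h" using sb q by auto
      have "map (\<lambda>x. x mod h) a ! i = map (\<lambda>x. x mod h) b ! i" using M by simp
      then have m: "a ! i mod h = b ! i mod h" using i la lb by simp
      have c: "a ! i < h \<longleftrightarrow> b ! i < h" using S i la by blast
      show "a ! i = b ! i"
      proof (cases "a ! i < h")
        case True then show ?thesis using c m by simp
      next
        case False
        then have "a ! i mod h = a ! i - h" using ai by (simp add: le_mod_geq)
        moreover have "b ! i mod h = b ! i - h" using False c bi by (simp add: le_mod_geq)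
        ultimately show ?thesis using m False c by simp
      qed
    qed
  qed
  have img: "f ` B \<subseteq> {S. S \<subseteq> {0..<n} \<and> card S = n div 2} \<times> {xs. set xs \<subseteq> {0..<h} \<and> length xs = n}"
  proof
    fix y assume "y \<in> f ` B"
    then obtain a where a: "a \<in> B" and y: "y = f a" by blast
    have la: "length a = n" using a by (auto simp: B_def words_def)
    have "balanced n q a" using a by (simp add: B_def)
    then have bal: "card {i. i < length a \<and> a ! i < h} = n div 2" unfolding balanced_def h_def .
    have sa: "set a \<subseteq> {0..<q}" using a by (simp add: B_def words_def)
    have "x mod h < h" if x: "x \<in> set a" for x
    proof -
      have "x < 2*h" using sa x q by auto
      then have "0 < h" by simp
      then show ?thesis by simp
    qed
    then have "set (map (\<lambda>x. x mod h) a) \<subseteq> {0..<h}" by auto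
    then show "y \<in> {S. S \<subseteq> {0..<n} \<and> card S = n div 2} \<times> {xs. set xs \<subseteq> {0..<h} \<and> length xs = n}"
      using y la bal by (auto simp: f_def)
  qed
  have "card B = card (f ` B)" using inj by (simp add: card_image)
  also have "\<dots> \<le> card ({S. S \<subseteq> {0..<n} \<and> card S = n div 2} \<times> {xs. set xs \<subseteq> {0..<h} \<and> length xs = n})"
    using img fin1 fin2 by (intro card_mono) auto
  also have "\<dots> = (n choose (n div 2)) * h ^ n"
    using fin1 fin2 by (simp add: card_cartesian_product n_subsets card_lists_length_eq)
  finally show ?thesis unfolding B_def h_def .
qed

lemma code_bound:
  assumes C: "balanced_MU_code n q C" and q: "even q" and n: "n \<ge> 1"
  shows "n * card C \<le> (n choose (n div 2)) * (q div 2) ^ n"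
proof -
  have sub: "C \<subseteq> words n q" and mu: "mutually_uncorrelated C" and bal: "\<forall>a\<in>C. balanced n q a"
    using C by (auto simp: balanced_MU_code_def)
  have finW: "finite (words n q)"
  proof -
    have "words n q = {xs. set xs \<subseteq> {0..<q} \<and> length xs = n}" by (auto simp: words_def)
    then show ?thesis using finite_lists_length_eq[of "{0..<q}" n] by simp
  qed
  have finC: "finite C" using sub finW finite_subset by blast
  define g where "g = (\<lambda>(a::nat list, k::nat). rotate k a)"
  have lenC: "\<And>a. a \<in> C \<Longrightarrow> length a = n" using sub by (auto simp: words_def)
  have inj: "inj_on g (C \<times> {0..<n})"
  proof (rule inj_onI, clarify)
    fix a k b j assume a: "a \<in> C" and k: "k \<in> {0..<n}" and b: "b \<in> C" and j: "j \<in> {0..<n}"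
      and e: "g (a, k) = g (b, j)"
    then have e': "rotate k a = rotate j b" by (simp add: g_def)
    have "\<not> k < j" using rot_contra[OF mu a b lenC[OF a] lenC[OF b] _ _ e'] j by auto
    moreover have "\<not> j < k" using rot_contra[OF mu b a lenC[OF b] lenC[OF a] _ _ e'[symmetric]] k by auto
    ultimately have kj: "k = j" by simp
    have "rotate (n-j) (rotate j a) = rotate (n-j) (rotate j b)" using e' kj by simp
    then have "rotate (n-j+j) a = rotate (n-j+j) b" by (simp add: rotate_rotate)
    moreover have "n-j+j = n" using j by simp
    ultimately have "a = b" using lenC[OF a] lenC[OF b] by (simp add: rotate_id)
    then show "a = b \<and> k = j" using kj by simp
  qed
  have img: "g ` (C \<times> {0..<n}) \<subseteq> {a \<in> words n q. balanced n q a}"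
  proof
    fix y assume "y \<in> g ` (C \<times> {0..<n})"
    then obtain a k where a: "a \<in> C" and y: "y = rotate k a" by (auto simp: g_def)
    have "a \<in> words n q" using a sub by blast
    then have "y \<in> words n q" using y by (simp add: words_def)
    moreover have "balanced n q y" using bal a y by (simp add: balanced_filter filter_rotate_len)
    ultimately show "y \<in> {a \<in> words n q. balanced n q a}" by simp
  qed
  have "n * card C = card (C \<times> {0..<n})" by (simp add: card_cartesian_product)
  also have "\<dots> = card (g ` (C \<times> {0..<n}))" using inj by (simp add: card_image)
  also have "\<dots> \<le> card {a \<in> words n q. balanced n q a}" using img finW by (intro card_mono) auto
  also have "\<dots> \<le> (n choose (n div 2)) * (q div 2) ^ n" using card_balanced[OF q] .
  finally show ?thesis .
qed

theorem theorem7: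
  fixes n q :: nat
  assumes "even n" "n \<ge> 2" "even q" "q \<ge> 2"
  shows "real (A_BMU n q) \<le> real (n choose (n div 2)) * (real q / 2) ^ n / real n"
proof -
  have finW: "finite (words n q)"
  proof -
    have "words n q = {xs. set xs \<subseteq> {0..<q} \<and> length xs = n}" by (auto simp: words_def)
    then show ?thesis using finite_lists_length_eq[of "{0..<q}" n] by simp
  qed
  let ?S = "{card C | C. balanced_MU_code n q C}"
  have "?S \<subseteq> {0..card (words n q)}"
    using finW by (auto simp: balanced_MU_code_def intro: card_mono)
  then have finS: "finite ?S" using finite_subset by blast
  have "0 \<in> ?S" by (rule CollectI, rule exI[of _ "{}"]) (simp add: balanced_MU_code_def mutually_uncorrelated_def)
  then have "A_BMU n q \<in> ?S" unfolding A_BMU_def using finS by (intro Max_in) auto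
  then obtain C where C: "balanced_MU_code n q C" and A: "A_BMU n q = card C" by blast
  have "n * A_BMU n q \<le> (n choose (n div 2)) * (q div 2) ^ n"
    using code_bound[OF C assms(3)] assms(2) A by simp
  then have "real n * real (A_BMU n q) \<le> real (n choose (n div 2)) * real (q div 2) ^ n"
    by (metis of_nat_le_iff of_nat_mult of_nat_power)
  moreover have "real (q div 2) = real q / 2" using assms(3) by (auto elim: evenE)
  ultimately have "real n * real (A_BMU n q) \<le> real (n choose (n div 2)) * (real q / 2) ^ n" by simp
  moreover have "real n > 0" using assms(2) by simp
  ultimately show ?thesis by (simp add: field_simps)
qed

end
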